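(* Any non-confluent explicit Runge--Kutta method with 4 stages and order 4 has positivity step-size coefficient $\gamma=0$.
   Context: An $m$-stage explicit Runge--Kutta method has strictly lower-triangular $A=(a_{ij})\in\mathbb{R}^{m\times m}$, $b\in\mathbb{R}^m$, nodes $c_i=\sum_ja_{ij}$; it is non-confluent if the $c_i$ are pairwise distinct. Applied to $u_k'=q_k(u,t)(u_{k-1}-u_k)/\Delta x$ ($k=1,\dots,N$, $u_0:=u_N$) with step $\Delta t$: $y^i_k=u^n_k+\sum_{j<i}a_{ij}\xi^j_k(y^j_{k-1}-y^j_k)$, $u^{n+1}_k=u^n_k+\sum_ib_i\xi^i_k(y^i_{k-1}-y^i_k)$, $\xi^j_k=\frac{\Delta t}{\Delta x}q_k(y^j,t_n+c_j\Delta t)$. Treating the $\xi^j_\ell$ as independent variables on the grid $\ell\in\mathbb{Z}$, $u^{n+1}_k=\sum_{i=0}^mP_i(\xi)u^n_{k-i}$ for polynomials $P_i$ (independent of $k$) in the $m(m+1)/2$ variables $\xi^j_\ell$, $1\le j\le m$, $k-(m-j)\le\ell\le k$. The step-size coefficient is $\gamma(A,b)=\sup\{\delta\ge0:P_i(\xi)\ge0\ \forall i,\ \forall\xi\in[0,\delta]^{m(m+1)/2}\}$ (or $0$ if empty). *)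

theory Defs
  imports "HOL-Analysis.Analysis"
begin

text \<open>Butcher tableau of an m-stage method: stages indexed 1..m;
  A :: nat => nat => real (entries a_ij), b :: nat => real (weights).\<close>

definition rk_node :: "nat \<Rightarrow> (nat \<Rightarrow> nat \<Rightarrow> real) \<Rightarrow> nat \<Rightarrow> real" where
  "rk_node m A i = (\<Sum>j\<in>{1..m}. A i j)"

definition explicit_rk :: "nat \<Rightarrow> (nat \<Rightarrow> nat \<Rightarrow> real) \<Rightarrow> bool" where
  "explicit_rk m A \<longleftrightarrow> (\<forall>i\<in>{1..m}. \<forall>j\<in>{1..m}. i \<le> j \<longrightarrow> A i j = 0)"

definition non_confluent :: "nat \<Rightarrow> (nat \<Rightarrow> nat \<Rightarrow> real) \<Rightarrow> bool" where
  "non_confluent m A \<longleftrightarrow> inj_on (rk_node m A) {1..m}"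

text \<open>Classical order conditions for order 4 (all rooted trees with at most 4 vertices).\<close>
definition rk_order4 :: "nat \<Rightarrow> (nat \<Rightarrow> nat \<Rightarrow> real) \<Rightarrow> (nat \<Rightarrow> real) \<Rightarrow> bool" where
  "rk_order4 m A b \<longleftrightarrow>
     (let c = rk_node m A; I = {1..m} in
      (\<Sum>i\<in>I. b i) = 1 \<and>
      (\<Sum>i\<in>I. b i * c i) = 1/2 \<and>
      (\<Sum>i\<in>I. b i * c i ^ 2) = 1/3 \<and>
      (\<Sum>i\<in>I. \<Sum>j\<in>I. b i * A i j * c j) = 1/6 \<and>
      (\<Sum>i\<in>I. b i * c i ^ 3) = 1/4 \<and>
      (\<Sum>i\<in>I. \<Sum>j\<in>I. b i * c i * A i j * c j) = 1/8 \<and>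
      (\<Sum>i\<in>I. \<Sum>j\<in>I. b i * A i j * c j ^ 2) = 1/12 \<and>
      (\<Sum>i\<in>I. \<Sum>j\<in>I. \<Sum>k\<in>I. b i * A i j * A j k * c k) = 1/24)"

text \<open>Stage values on the grid Z for the upwind discretisation, with xi j l the variable
  xi^j_l.  stages A xi u n j is y^j (for j <= n), built stage by stage.\<close>
primrec stages :: "(nat \<Rightarrow> nat \<Rightarrow> real) \<Rightarrow> (nat \<Rightarrow> int \<Rightarrow> real) \<Rightarrow> (int \<Rightarrow> real)
                    \<Rightarrow> nat \<Rightarrow> nat \<Rightarrow> int \<Rightarrow> real" where
  "stages A xi u 0 = (\<lambda>_ _. 0)"
| "stages A xi u (Suc n) = (stages A xi u n)(Suc n :=
      (\<lambda>l. u l + (\<Sum>j\<in>{1..n}. A (Suc n) j * xi j l *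
                      (stages A xi u n j (l - 1) - stages A xi u n j l))))"

definition rk_step :: "nat \<Rightarrow> (nat \<Rightarrow> nat \<Rightarrow> real) \<Rightarrow> (nat \<Rightarrow> real) \<Rightarrow> (nat \<Rightarrow> int \<Rightarrow> real)
                       \<Rightarrow> (int \<Rightarrow> real) \<Rightarrow> int \<Rightarrow> real" where
  "rk_step m A b xi u k = u k + (\<Sum>i\<in>{1..m}. b i * xi i k *
        (stages A xi u m i (k - 1) - stages A xi u m i k))"

text \<open>P_i(xi): coefficient of u^n_{k-i} in u^{n+1}_k, taken at k = 0 (the scheme is linear in u).\<close>
definition P_coeff :: "nat \<Rightarrow> (nat \<Rightarrow> nat \<Rightarrow> real) \<Rightarrow> (nat \<Rightarrow> real) \<Rightarrow> nat
                       \<Rightarrow> (nat \<Rightarrow> int \<Rightarrow> real) \<Rightarrow> real" where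
  "P_coeff m A b i xi = rk_step m A b xi (\<lambda>l. if l = - int i then 1 else 0) 0"

definition admissible_deltas :: "nat \<Rightarrow> (nat \<Rightarrow> nat \<Rightarrow> real) \<Rightarrow> (nat \<Rightarrow> real) \<Rightarrow> real set" where
  "admissible_deltas m A b = {\<delta>. \<delta> \<ge> 0 \<and>
     (\<forall>i\<in>{0..m}. \<forall>xi. (\<forall>j\<in>{1..m}. \<forall>l\<in>{- int (m - j)..0}. xi j l \<in> {0..\<delta>})
        \<longrightarrow> P_coeff m A b i xi \<ge> 0)}"

text \<open>Step-size coefficient gamma(A,b), as an extended real (the supremum may be infinite).\<close>
definition step_size_coeff :: "nat \<Rightarrow> (nat \<Rightarrow> nat \<Rightarrow> real) \<Rightarrow> (nat \<Rightarrow> real) \<Rightarrow> ereal" where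
  "step_size_coeff m A b =
     (if admissible_deltas m A b = {} then 0 else Sup (ereal ` admissible_deltas m A b))"

end

theory Submission
  imports Defs
begin

lemma s4: "(\<Sum>j\<in>{1..4::nat}. f j) = f 1 + f 2 + f 3 + (f 4::real)"
  by (simp add: eval_nat_numeral atLeastAtMostSuc_conv)
lemma s3: "(\<Sum>j\<in>{1..3::nat}. f j) = f 1 + f 2 + (f 3::real)"
  by (simp add: eval_nat_numeral atLeastAtMostSuc_conv)
lemma s2: "(\<Sum>j\<in>{1..2::nat}. f j) = f 1 + (f 2::real)"
  by (simp add: eval_nat_numeral atLeastAtMostSuc_conv)

lemma adm_P:
  assumes "\<delta> \<in> admissible_deltas 4 A b" "i \<le> 4" "\<And>j l. xi j l \<in> {0..\<delta>}"
  shows "P_coeff 4 A b i xi \<ge> 0"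
  using assms unfolding admissible_deltas_def by auto

lemma pos_of:
  assumes "0 \<le> p * d ^ r" "(d::real) > 0" shows "p \<ge> 0"
proof -
  have "d ^ r > 0" using assms(2) by simp
  then show ?thesis using assms(1) by (simp add: zero_le_mult_iff)
qed

lemma wit_gen:
  assumes "\<delta> \<in> admissible_deltas 4 A b" "\<delta> > 0" "i \<le> 4"
    and "P_coeff 4 A b i (\<lambda>j l. if C j l then \<delta> else 0) = p * \<delta> ^ i"
  shows "p \<ge> 0"
proof -
  have "P_coeff 4 A b i (\<lambda>j l. if C j l then \<delta> else 0) \<ge> 0"
    by (rule adm_P[OF assms(1,3)]) (use assms(2) in auto)
  then show ?thesis using assms(2,4) pos_of by metis
qed

lemma signs:
  assumes "\<delta> \<in> admissible_deltas 4 A b" "\<delta> > 0"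
  shows "b 2 \<ge> 0" "b 3 \<ge> 0" "b 4 \<ge> 0" "b 4 * A 4 1 \<ge> 0" "b 4 * A 4 2 \<ge> 0" "b 4 * A 4 3 \<ge> 0"
    "b 4 * A 4 3 * A 3 1 \<ge> 0" "b 4 * A 4 3 * A 3 2 \<ge> 0"
proof -
  note W = wit_gen[OF assms]
  show "b 2 \<ge> 0" by (rule W[where i=1 and C="\<lambda>j l. (j,l) = (2,0)"])
    (simp_all add: P_coeff_def rk_step_def s4 s3 s2 numeral_eq_Suc)
  show "b 3 \<ge> 0" by (rule W[where i=1 and C="\<lambda>j l. (j,l) = (3,0)"])
    (simp_all add: P_coeff_def rk_step_def s4 s3 s2 numeral_eq_Suc)
  show "b 4 \<ge> 0" by (rule W[where i=1 and C="\<lambda>j l. (j,l) = (4,0)"])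
    (simp_all add: P_coeff_def rk_step_def s4 s3 s2 numeral_eq_Suc)
  show "b 4 * A 4 1 \<ge> 0" by (rule W[where i=2 and C="\<lambda>j l. (j,l) = (4,0) \<or> (j,l) = (1,-1)"])
    (simp_all add: P_coeff_def rk_step_def s4 s3 s2 numeral_eq_Suc power2_eq_square)
  show "b 4 * A 4 2 \<ge> 0" by (rule W[where i=2 and C="\<lambda>j l. (j,l) = (4,0) \<or> (j,l) = (2,-1)"])
    (simp_all add: P_coeff_def rk_step_def s4 s3 s2 numeral_eq_Suc power2_eq_square)
  show "b 4 * A 4 3 \<ge> 0" by (rule W[where i=2 and C="\<lambda>j l. (j,l) = (4,0) \<or> (j,l) = (3,-1)"])
    (simp_all add: P_coeff_def rk_step_def s4 s3 s2 numeral_eq_Suc power2_eq_square)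
  show "b 4 * A 4 3 * A 3 1 \<ge> 0" by (rule W[where i=3 and C="\<lambda>j l. (j,l) = (4,0) \<or> (j,l) = (3,-1) \<or> (j,l) = (1,-2)"])
    (simp_all add: P_coeff_def rk_step_def s4 s3 s2 numeral_eq_Suc power3_eq_cube)
  show "b 4 * A 4 3 * A 3 2 \<ge> 0" by (rule W[where i=3 and C="\<lambda>j l. (j,l) = (4,0) \<or> (j,l) = (3,-1) \<or> (j,l) = (2,-2)"])
    (simp_all add: P_coeff_def rk_step_def s4 s3 s2 numeral_eq_Suc power3_eq_cube)
qed

lemma idst: fixes s t :: real shows
 "12 * (s+1/2) * (1/2-t) * (1-(s+1/2)) * (1-(1/2-t)) * ((s+1/2)-(1/2-t)) - 2 * (1/2-t) * (1-(1/2-t)) * (1-2 * (1/2-t)) - 2 * (s+1/2) * (1-(s+1/2)) * (2 * (s+1/2)-1) + (1/2-t) * (1-(s+1/2)) * ((s+1/2)-(1/2-t))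
  = - ((s+t) * ((s/2 - s^2) + (t/2 - t^2) + (3 * s * t - 12 * s^2 * t^2)))"
  by (simp add: field_simps power2_eq_square)

lemma core:
  fixes a21 a31 a32 a41 a42 a43 b1 b2 b3 b4 u v w :: real
  assumes hu: "u = a21" and hv: "v = a31 + a32" and hw: "w = a41 + a42 + a43"
  and o1: "b1+b2+b3+b4 = 1"
  and o2: "b2 * u + b3 * v + b4 * w = 1/2"
  and o3: "b2 * u^2 + b3 * v^2 + b4 * w^2 = 1/3"
  and o4: "b3 * a32 * u + b4 * (a42 * u + a43 * v) = 1/6"
  and o5: "b2 * u^3+b3 * v^3+b4 * w^3 = 1/4"
  and o6: "b3 * v * a32 * u + b4 * w * (a42 * u+a43 * v) = 1/8"
  and o7: "b3 * a32 * u^2 + b4 * (a42 * u^2+a43 * v^2) = 1/12"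
  and o8: "b4 * a43 * a32 * u = 1/24"
  and nuv: "u \<noteq> v"
  and sb2: "b2 \<ge> 0" and sb3: "b3 \<ge> 0" and sb4: "b4 \<ge> 0"
  and s41: "b4 * a41 \<ge> 0" and s42: "b4 * a42 \<ge> 0" and s43: "b4 * a43 \<ge> 0"
  and s431: "b4 * a43 * a31 \<ge> 0" and s432: "b4 * a43 * a32 \<ge> 0"
  shows False
proof -
  have b4p: "b4 > 0" using sb4 o8 by (auto simp: less_le)
  have ba43: "b4 * a43 > 0" using s43 o8 by (auto simp: less_le)
  have a43p: "a43 > 0" using ba43 b4p by (simp add: zero_less_mult_iff)
  have ba432: "b4 * a43 * a32 > 0" using s432 o8 by (auto simp: less_le)
  have a32p: "a32 > 0" using ba432 ba43 by (simp add: zero_less_mult_iff)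
  have up0: "(b4 * a43 * a32) * u > 0" using o8 by simp
  have up: "u > 0" using up0 ba432 by (simp add: zero_less_mult_iff)
  have a31n: "a31 \<ge> 0" using s431 ba43 by (simp add: zero_le_mult_iff)
  have a41n: "a41 \<ge> 0" using s41 b4p by (simp add: zero_le_mult_iff)
  have a42n: "a42 \<ge> 0" using s42 b4p by (simp add: zero_le_mult_iff)
  have vp: "v > 0" using hv a31n a32p by simp
  define p where "p = a32 * u"
  define q where "q = a42 * u + a43 * v"
  define d2 where "d2 = b3 * a32 + b4 * a42 - b2 * (1-u)"
  define d3 where "d3 = b4 * a43 - b3 * (1-v)"
  define d4 where "d4 = - b4 * (1-w)"
  have E1: "d2 * u + d3 * v + d4 * w = 0" using o2 o3 o4 unfolding d2_def d3_def d4_def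
    by (simp add: algebra_simps power2_eq_square) 
  have E2: "d2 * u^2 + d3 * v^2 + d4 * w^2 = 0" using o3 o5 o7 unfolding d2_def d3_def d4_def
    by (simp add: algebra_simps power2_eq_square power3_eq_cube) 
  have E3: "d3 * p + d4 * q = 0"
  proof -
    have "d3 * p + d4 * q = (b4 * a43 * a32 * u) - (b3 * a32 * u + b4 * (a42 * u + a43 * v)) + (b3 * v * a32 * u + b4 * w * (a42 * u+a43 * v))"
      unfolding d3_def d4_def p_def q_def by algebra
    then show ?thesis using o4 o6 o8 by simp
  qed
  define Dl where "Dl = q * v * (v-u) - p * w * (w-u)"
  have Dnz: "Dl \<noteq> 0"
  proof
    assume D0: "Dl = 0"
    have F1: "p * u/2 - p/3 + v * (v-u)/6 = 0"
    proof -
      have "p * u/2 - p/3 + v * (v-u)/6 = (p * u) * (b2 * u + b3 * v + b4 * w) - p * (b2 * u^2 + b3 * v^2 + b4 * w^2) + v * (v-u) * (b3 * a32 * u + b4 * (a42 * u + a43 * v))"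
        unfolding o2 o3 o4 by simp
      also have "\<dots> = b4 * Dl" unfolding Dl_def p_def q_def by algebra
      finally show ?thesis using D0 by simp
    qed
    have F2: "p * u/3 - p/4 + v * (v-u)/8 = 0"
    proof -
      have "p * u/3 - p/4 + v * (v-u)/8 = (p * u) * (b2 * u^2 + b3 * v^2 + b4 * w^2) - p * (b2 * u^3+b3 * v^3+b4 * w^3) + v * (v-u) * (b3 * v * a32 * u + b4 * w * (a42 * u+a43 * v))"
        unfolding o3 o5 o6 by simp
      also have "\<dots> = b4 * w * Dl" unfolding Dl_def p_def q_def by algebra
      finally show ?thesis using D0 by simp
    qed
    have "p * u = 24 * (3/4 * (p * u/2 - p/3 + v * (v-u)/6) - (p * u/3 - p/4 + v * (v-u)/8))" by algebra
    then have "p * u = 0" using F1 F2 by simp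
    moreover have "p * u > 0" unfolding p_def using a32p up by simp
    ultimately show False by auto
  qed
  have "d4 * (u * Dl) = u^2 * p * (d2 * u + d3 * v + d4 * w) - u * p * (d2 * u^2 + d3 * v^2 + d4 * w^2) + u * v * (v-u) * (d3 * p + d4 * q)"
    unfolding Dl_def by algebra
  then have "d4 * (u * Dl) = 0" unfolding E1 E2 E3 by simp
  then have "d4 = 0" using Dnz up by simp
  then have w1: "w = 1" using b4p unfolding d4_def by simp
  have d3z: "d3 = 0" using E3 \<open>d4 = 0\<close> p_def a32p up by simp
  have d2z: "d2 = 0" using E1 \<open>d4 = 0\<close> d3z up by simp
  have B3: "b4 * a43 = b3 * (1-v)" using d3z unfolding d3_def by simp
  have B2: "b3 * a32 + b4 * a42 = b2 * (1-u)" using d2z unfolding d2_def by simp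
  have K: "b3 * (1-v) * a32 * u = 1/24" using o8 B3 by simp
  have b3v: "b3 * (1-v) > 0" using B3 ba43 by simp
  have b3p: "b3 > 0" using b3v sb3 by (auto simp: less_le)
  have v1: "1 - v > 0" using b3v b3p by (simp add: zero_less_mult_iff)
  have b2u: "b2 * (1-u) > 0" using B2 b3p a32p b4p a42n
    by (metis add_pos_nonneg mult_nonneg_nonneg mult_pos_pos less_imp_le)
  have b2p: "b2 > 0" using b2u sb2 by (auto simp: less_le)
  have u1: "1 - u > 0" using b2u b2p by (simp add: zero_less_mult_iff)
  have Q2: "12 * b2 * u * (1-u) * (v-u) = 2 * v-1"
  proof -
    have "12 * b2 * u * (1-u) * (v-u) = 12 * ((b2 * u^3+b3 * v^3+b4 * w^3) - (1+v) * (b2 * u^2 + b3 * v^2 + b4 * w^2) + v * (b2 * u + b3 * v + b4 * w))"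
      using w1 by algebra
    then show ?thesis unfolding o2 o3 o5 by (simp add: field_simps)
  qed
  have Q3: "12 * b3 * v * (1-v) * (v-u) = 1-2 * u"
  proof -
    have "12 * b3 * v * (1-v) * (v-u) = -12 * ((b2 * u^3+b3 * v^3+b4 * w^3) - (1+u) * (b2 * u^2 + b3 * v^2 + b4 * w^2) + u * (b2 * u + b3 * v + b4 * w))"
      using w1 by algebra
    then show ?thesis unfolding o2 o3 o5 by (simp add: field_simps)
  qed
  show False
  proof (cases "u < v")
    case True
    have vu: "v - u > 0" using True by simp
    have "1 \<le> 24 * b3 * (1-v) * v * u"
    proof -
      have "a32 \<le> v" using hv a31n by simp
      then have "24 * b3 * (1-v) * u * a32 \<le> 24 * b3 * (1-v) * u * v"
        using b3v up by (intro mult_left_mono) auto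
      moreover have "24 * b3 * (1-v) * u * a32 = 24 * (b3 * (1-v) * a32 * u)" by (simp add: algebra_simps)
      ultimately show ?thesis using K by (simp add: algebra_simps)
    qed
    then have "1 * (v-u) \<le> 24 * b3 * (1-v) * v * u * (v-u)" using vu by (intro mult_right_mono) auto
    also have "\<dots> = 2 * u * (12 * b3 * v * (1-v) * (v-u))" by (simp add: algebra_simps)
    also have "\<dots> = 2 * u * (1-2 * u)" unfolding Q3 ..
    finally have I1: "v - u \<le> 2 * u * (1-2 * u)" by simp
    have "1 \<le> 24 * u * (1-v) * b2 * (1-u)"
    proof -
      have "b3 * a32 \<le> b2 * (1-u)" using B2 s42 by simp
      then have "24 * u * (1-v) * (b3 * a32) \<le> 24 * u * (1-v) * (b2 * (1-u))"
        using v1 up by (intro mult_left_mono) auto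
      moreover have "24 * u * (1-v) * (b3 * a32) = 24 * (b3 * (1-v) * a32 * u)" by (simp add: algebra_simps)
      ultimately show ?thesis using K by (simp add: algebra_simps)
    qed
    then have "1 * (v-u) \<le> 24 * u * (1-v) * b2 * (1-u) * (v-u)" using vu by (intro mult_right_mono) auto
    also have "\<dots> = 2 * (1-v) * (12 * b2 * u * (1-u) * (v-u))" by (simp add: algebra_simps)
    also have "\<dots> = 2 * (1-v) * (2 * v-1)" unfolding Q2 ..
    finally have I2: "v - u \<le> 2 * (1-v) * (2 * v-1)" by simp
    have "(2 * u-1)^2 + (2 * v-1)^2 = -(2 * u * (1-2 * u) - (v-u) + (2 * (1-v) * (2 * v-1) - (v-u)))" by algebra
    then have "(2 * u-1)^2 + (2 * v-1)^2 \<le> 0" using I1 I2 by simp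
    moreover have "(2 * u-1)^2 \<ge> 0" "(2 * v-1)^2 \<ge> 0" by simp_all
    ultimately have "(2 * u-1)^2 = 0" "(2 * v-1)^2 = 0" by linarith+
    then show False using nuv by simp
  next
    case False
    then have uv: "u - v > 0" using nuv by simp
    have uh: "u > 1/2"
    proof -
      have "12 * b3 * v * (1-v) * (u-v) > 0" using b3p vp v1 uv by simp
      also have "12 * b3 * v * (1-v) * (u-v) = -(12 * b3 * v * (1-v) * (v-u))" by (simp add: algebra_simps)
      finally show ?thesis unfolding Q3 by simp
    qed
    have vh: "v < 1/2"
    proof -
      have "12 * b2 * u * (1-u) * (u-v) > 0" using b2p up u1 uv by simp
      also have "12 * b2 * u * (1-u) * (u-v) = -(12 * b2 * u * (1-u) * (v-u))" by (simp add: algebra_simps)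
      finally show ?thesis unfolding Q2 by simp
    qed
    have A41: "b4 * a41 = 1/2 - b2 - b3 + b3 * a32"
    proof -
      have "b4 * a41 = b4 * w - b4 * a42 - b4 * a43" using hw by (simp add: algebra_simps)
      also have "\<dots> = b4 - (b2 * (1-u) - b3 * a32) - b3 * (1-v)" using w1 B2 B3 by simp
      also have "\<dots> = (b2 * u + b3 * v + b4 * w) - b2 - b3 + b3 * a32" using w1 by (simp add: algebra_simps)
      finally show ?thesis unfolding o2 .
    qed
    define s where "s = u - 1/2"
    define t where "t = 1/2 - v"
    have sp: "s > 0" "s < 1/2" using uh u1 unfolding s_def by auto
    have tp: "t > 0" "t < 1/2" using vh vp unfolding t_def by auto
    define M where "M = 24 * u * v * (1-u) * (1-v) * (u-v)"
    have Mp: "M > 0" unfolding M_def using up vp u1 v1 uv by simp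
    have "M * (b4 * a41) = 12 * u * v * (1-u) * (1-v) * (u-v) - 2 * v * (1-v) * (-(12 * b2 * u * (1-u) * (v-u))) - 2 * u * (1-u) * (-(12 * b3 * v * (1-v) * (v-u))) + v * (1-u) * (u-v) * (24 * (b3 * (1-v) * a32 * u))"
      unfolding A41 M_def by algebra
    also have "\<dots> = 12 * u * v * (1-u) * (1-v) * (u-v) - 2 * v * (1-v) * (1-2 * v) - 2 * u * (1-u) * (2 * u-1) + v * (1-u) * (u-v)"
      unfolding Q2 Q3 K by simp
    also have "\<dots> = - ((s+t) * ((s/2 - s^2) + (t/2 - t^2) + (3 * s * t - 12 * s^2 * t^2)))"
    proof -
      have eu: "u = s + 1/2" and ev: "v = 1/2 - t" unfolding s_def t_def by simp_all
      show ?thesis unfolding eu ev by (rule idst)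
    qed
    also have "\<dots> < 0"
    proof -
      have "s^2 < s/2" using sp by (simp add: power2_eq_square)
      moreover have "t^2 < t/2" using tp by (simp add: power2_eq_square)
      moreover have "s * t < 1/4"
      proof -
        have "s * t < (1/2) * (1/2)" using sp tp by (intro mult_strict_mono) auto
        then show ?thesis by simp
      qed
      moreover have "3 * s * t - 12 * s^2 * t^2 > 0"
      proof -
        have "3 * s * t - 12 * s^2 * t^2 = 3 * (s * t) * (1 - 4 * (s * t))" by algebra
        moreover have "3 * (s * t) * (1 - 4 * (s * t)) > 0" using \<open>s * t < 1/4\<close> sp tp by simp
        ultimately show ?thesis by simp
      qed
      ultimately have "(s/2 - s^2) + (t/2 - t^2) + (3 * s * t - 12 * s^2 * t^2) > 0" by (intro add_pos_pos) auto

      then show ?thesis using sp tp by simp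
    qed
    finally have "M * (b4 * a41) < 0" .
    moreover have "M * (b4 * a41) \<ge> 0" using Mp s41 by simp
    ultimately show False by simp
  qed
qed

theorem proposition7:
  fixes A :: "nat \<Rightarrow> nat \<Rightarrow> real" and b :: "nat \<Rightarrow> real"
  assumes "explicit_rk 4 A"
    and "non_confluent 4 A"
    and "rk_order4 4 A b"
  shows "step_size_coeff 4 A b = 0"
proof -
  have Z: "A 1 1 = 0" "A 1 2 = 0" "A 1 3 = 0" "A 1 4 = 0" "A 2 2 = 0" "A 2 3 = 0" "A 2 4 = 0"
    "A 3 3 = 0" "A 3 4 = 0" "A 4 4 = 0"
    using assms(1) unfolding explicit_rk_def by auto
  have C: "rk_node 4 A 1 = 0" "rk_node 4 A 2 = A 2 1" "rk_node 4 A 3 = A 3 1 + A 3 2"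
    "rk_node 4 A 4 = A 4 1 + A 4 2 + A 4 3"
    using Z unfolding rk_node_def s4 by simp_all
  have "rk_node 4 A 2 \<noteq> rk_node 4 A 3"
    using assms(2) unfolding non_confluent_def inj_on_def by fastforce
  then have nc: "A 2 1 \<noteq> A 3 1 + A 3 2" by (simp add: C)
  have O: "(\<Sum>i\<in>{1..4}. b i) = 1 \<and>
      (\<Sum>i\<in>{1..4}. b i * rk_node 4 A i) = 1/2 \<and>
      (\<Sum>i\<in>{1..4}. b i * rk_node 4 A i ^ 2) = 1/3 \<and>
      (\<Sum>i\<in>{1..4}. \<Sum>j\<in>{1..4}. b i * A i j * rk_node 4 A j) = 1/6 \<and>
      (\<Sum>i\<in>{1..4}. b i * rk_node 4 A i ^ 3) = 1/4 \<and>
      (\<Sum>i\<in>{1..4}. \<Sum>j\<in>{1..4}. b i * rk_node 4 A i * A i j * rk_node 4 A j) = 1/8 \<and>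
      (\<Sum>i\<in>{1..4}. \<Sum>j\<in>{1..4}. b i * A i j * rk_node 4 A j ^ 2) = 1/12 \<and>
      (\<Sum>i\<in>{1..4}. \<Sum>j\<in>{1..4}. \<Sum>k\<in>{1..4}. b i * A i j * A j k * rk_node 4 A k) = 1/24"
    using assms(3) unfolding rk_order4_def Let_def by simp
  then have O1: "(\<Sum>i\<in>{1..4}. b i) = 1" 
    and O2: "(\<Sum>i\<in>{1..4}. b i * rk_node 4 A i) = 1/2"
    and O3: "(\<Sum>i\<in>{1..4}. b i * rk_node 4 A i ^ 2) = 1/3"
    and O4: "(\<Sum>i\<in>{1..4}. \<Sum>j\<in>{1..4}. b i * A i j * rk_node 4 A j) = 1/6"
    and O5: "(\<Sum>i\<in>{1..4}. b i * rk_node 4 A i ^ 3) = 1/4"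
    and O6: "(\<Sum>i\<in>{1..4}. \<Sum>j\<in>{1..4}. b i * rk_node 4 A i * A i j * rk_node 4 A j) = 1/8"
    and O7: "(\<Sum>i\<in>{1..4}. \<Sum>j\<in>{1..4}. b i * A i j * rk_node 4 A j ^ 2) = 1/12"
    and O8: "(\<Sum>i\<in>{1..4}. \<Sum>j\<in>{1..4}. \<Sum>k\<in>{1..4}. b i * A i j * A j k * rk_node 4 A k) = 1/24"
    by blast+
  have adm: "admissible_deltas 4 A b \<subseteq> {0}"
  proof
    fix \<delta> assume d: "\<delta> \<in> admissible_deltas 4 A b"
    have "\<delta> \<ge> 0" using d unfolding admissible_deltas_def by auto
    moreover have "\<not> \<delta> > 0"
    proof
      assume dp: "\<delta> > 0"
      note S = signs[OF d dp]
      show False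
      proof (rule core[of "A 2 1" "A 2 1" "A 3 1 + A 3 2" "A 3 1" "A 3 2" "A 4 1 + A 4 2 + A 4 3" "A 4 1" "A 4 2" "A 4 3" "b 1" "b 2" "b 3" "b 4"])
        show "b 1 + b 2 + b 3 + b 4 = 1" using O1 unfolding s4 by simp
        show "b 2 * A 2 1 + b 3 * (A 3 1 + A 3 2) + b 4 * (A 4 1 + A 4 2 + A 4 3) = 1/2"
          using O2 C Z unfolding s4 by simp
        show "b 2 * (A 2 1)^2 + b 3 * (A 3 1 + A 3 2)^2 + b 4 * (A 4 1 + A 4 2 + A 4 3)^2 = 1/3"
          using O3 C Z unfolding s4 by simp
        show "b 3 * A 3 2 * A 2 1 + b 4 * (A 4 2 * A 2 1 + A 4 3 * (A 3 1 + A 3 2)) = 1/6"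
          using O4 C Z unfolding s4 by (simp add: algebra_simps)
        show "b 2 * (A 2 1)^3 + b 3 * (A 3 1 + A 3 2)^3 + b 4 * (A 4 1 + A 4 2 + A 4 3)^3 = 1/4"
          using O5 C Z unfolding s4 by simp
        show "b 3 * (A 3 1 + A 3 2) * A 3 2 * A 2 1 + b 4 * (A 4 1 + A 4 2 + A 4 3) * (A 4 2 * A 2 1 + A 4 3 * (A 3 1 + A 3 2)) = 1/8"
          using O6 C Z unfolding s4 by (simp add: algebra_simps)
        show "b 3 * A 3 2 * (A 2 1)^2 + b 4 * (A 4 2 * (A 2 1)^2 + A 4 3 * (A 3 1 + A 3 2)^2) = 1/12"
          using O7 C Z unfolding s4 by (simp add: algebra_simps)
        show "b 4 * A 4 3 * A 3 2 * A 2 1 = 1/24"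
          using O8 C Z unfolding s4 by (simp add: algebra_simps)
      qed (use nc S in auto)
    qed
    ultimately show "\<delta> \<in> {0}" by simp
  qed
  show ?thesis
  proof (cases "admissible_deltas 4 A b = {}")
    case True
    then show ?thesis unfolding step_size_coeff_def by simp
  next
    case False
    then have "admissible_deltas 4 A b = {0}" using adm by blast
    then show ?thesis unfolding step_size_coeff_def by (simp add: zero_ereal_def)
  qed
qed

end
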